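(* Every map in $p\mathsf{Ch}^*_\mathbb{Q}$ having the right lifting property with respect to all maps in $\mathbb{I}$ also has the right lifting property with respect to all maps in $\mathbb{J}$.
   Context: $p\mathsf{Ch}^*_\mathbb{Q}=\mathsf{Fun}([0,\infty),\mathsf{Ch}^*_\mathbb{Q})$, non-negatively graded rational cochain complexes. $S^k=\mathbb{Q}$ in degree $k$; $D^k$ ($k\ge1$) is $\mathbb{Q}$ in degrees $k-1,k$ with identity differential; $D^0=0$. For $0\le s<t<\infty$, $\mathbb{S}^k_{[s,t)}$ is $0$ at $r<s$, $S^k$ at $s\le r<t$, $D^k$ at $r\ge t$; $\mathbb{S}^k_{[s,\infty)}$ is $0$ at $r<s$, $S^k$ at $r\ge s$; $\mathbb{D}^k_s$ is $0$ at $r<s$, $D^k$ at $r\ge s$ (structure maps identities/inclusions). $\mathbb{I}=\{\mathbb{S}^k_{[s,t)}\to\mathbb{D}^k_s: k\in\mathbb{N},\ 0\le s<t\le\infty\}$ and $\mathbb{J}=\{\mathbb{D}^k_t\to\mathbb{D}^k_s: k\in\mathbb{N},\ 0\le s<t<\infty\}\cup\{0\to\mathbb{D}^k_s: k\in\mathbb{N},\ 0\le s<\infty\}$ (evident inclusions). *)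

theory Defs
  imports Complex_Main "HOL-Library.Extended_Real"
begin

text \<open>A persistence (non-negatively graded) rational cochain complex, i.e. a functor
  [0,oo) -> Ch*_Q. Component at parameter r and degree n is the Q-subspace pcar X r n of
  the ambient Q-vector space 'a (scalar multiplication pscale X); pdif X r n is the
  differential from degree n to degree n+1; pstr X r r' n is the structure map from
  parameter r to parameter r' (r <= r') in degree n. Only values on carriers and for
  parameters r >= 0 matter.\<close>

record 'a pcc =
  pscale :: "rat \<Rightarrow> 'a \<Rightarrow> 'a"
  pcar :: "real \<Rightarrow> nat \<Rightarrow> 'a set"
  pdif :: "real \<Rightarrow> nat \<Rightarrow> 'a \<Rightarrow> 'a"
  pstr :: "real \<Rightarrow> real \<Rightarrow> nat \<Rightarrow> 'a \<Rightarrow> 'a"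

definition lin_on ::
  "(rat \<Rightarrow> 'a::ab_group_add \<Rightarrow> 'a) \<Rightarrow> (rat \<Rightarrow> 'b::ab_group_add \<Rightarrow> 'b) \<Rightarrow> 'a set \<Rightarrow> ('a \<Rightarrow> 'b) \<Rightarrow> bool" where
  "lin_on sa sb A f \<longleftrightarrow>
     (\<forall>x\<in>A. \<forall>y\<in>A. f (x + y) = f x + f y) \<and> (\<forall>c. \<forall>x\<in>A. f (sa c x) = sb c (f x))"

definition is_pcc :: "'a::ab_group_add pcc \<Rightarrow> bool" where
  "is_pcc X \<longleftrightarrow>
     vector_space (pscale X) \<and>
     (\<forall>r n. 0 \<le> r \<longrightarrow>
        module.subspace (pscale X) (pcar X r n) \<and>
        lin_on (pscale X) (pscale X) (pcar X r n) (pdif X r n) \<and>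
        pdif X r n ` pcar X r n \<subseteq> pcar X r (Suc n) \<and>
        (\<forall>x\<in>pcar X r n. pdif X r (Suc n) (pdif X r n x) = 0)) \<and>
     (\<forall>r r' n. 0 \<le> r \<and> r \<le> r' \<longrightarrow>
        lin_on (pscale X) (pscale X) (pcar X r n) (pstr X r r' n) \<and>
        pstr X r r' n ` pcar X r n \<subseteq> pcar X r' n \<and>
        (\<forall>x\<in>pcar X r n. pdif X r' n (pstr X r r' n x) = pstr X r r' (Suc n) (pdif X r n x))) \<and>
     (\<forall>r n. 0 \<le> r \<longrightarrow> (\<forall>x\<in>pcar X r n. pstr X r r n x = x)) \<and>
     (\<forall>r r' r'' n. 0 \<le> r \<and> r \<le> r' \<and> r' \<le> r'' \<longrightarrow>
        (\<forall>x\<in>pcar X r n. pstr X r' r'' n (pstr X r r' n x) = pstr X r r'' n x))"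

definition pmor ::
  "'a::ab_group_add pcc \<Rightarrow> 'b::ab_group_add pcc \<Rightarrow> (real \<Rightarrow> nat \<Rightarrow> 'a \<Rightarrow> 'b) \<Rightarrow> bool" where
  "pmor X Y f \<longleftrightarrow> is_pcc X \<and> is_pcc Y \<and>
     (\<forall>r n. 0 \<le> r \<longrightarrow>
        lin_on (pscale X) (pscale Y) (pcar X r n) (f r n) \<and>
        f r n ` pcar X r n \<subseteq> pcar Y r n \<and>
        (\<forall>x\<in>pcar X r n. f r (Suc n) (pdif X r n x) = pdif Y r n (f r n x))) \<and>
     (\<forall>r r' n. 0 \<le> r \<and> r \<le> r' \<longrightarrow>
        (\<forall>x\<in>pcar X r n. f r' n (pstr X r r' n x) = pstr Y r r' n (f r n x)))"

definition has_rlp ::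
  "'c::ab_group_add pcc \<Rightarrow> 'd::ab_group_add pcc \<Rightarrow> (real \<Rightarrow> nat \<Rightarrow> 'c \<Rightarrow> 'd) \<Rightarrow>
   'a::ab_group_add pcc \<Rightarrow> 'b::ab_group_add pcc \<Rightarrow> (real \<Rightarrow> nat \<Rightarrow> 'a \<Rightarrow> 'b) \<Rightarrow> bool" where
  "has_rlp A B i X Y p \<longleftrightarrow>
     (\<forall>u v. pmor A X u \<longrightarrow> pmor B Y v \<longrightarrow>
        (\<forall>r n. 0 \<le> r \<longrightarrow> (\<forall>x\<in>pcar A r n. v r n (i r n x) = p r n (u r n x))) \<longrightarrow>
        (\<exists>h. pmor B X h \<and>
           (\<forall>r n. 0 \<le> r \<longrightarrow> (\<forall>x\<in>pcar A r n. h r n (i r n x) = u r n x)) \<and>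
           (\<forall>r n. 0 \<le> r \<longrightarrow> (\<forall>x\<in>pcar B r n. p r n (h r n x) = v r n x))))"

definition Scar :: "nat \<Rightarrow> nat \<Rightarrow> rat set" where
  "Scar k n = (if n = k then UNIV else {0})"

(* D^k (k >= 1): Q in degrees k-1 and k; D^0 = 0 *)
definition Dcar :: "nat \<Rightarrow> nat \<Rightarrow> rat set" where
  "Dcar k n = (if 1 \<le> k \<and> (n = k \<or> Suc n = k) then UNIV else {0})"

definition Ddif :: "nat \<Rightarrow> nat \<Rightarrow> rat \<Rightarrow> rat" where
  "Ddif k n x = (if 1 \<le> k \<and> Suc n = k then x else 0)"

definition Sph :: "nat \<Rightarrow> real \<Rightarrow> ereal \<Rightarrow> rat pcc" where
  "Sph k s t =
     \<lparr> pscale = (*),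
       pcar = (\<lambda>r n. if r < s then {0} else if ereal r < t then Scar k n else Dcar k n),
       pdif = (\<lambda>r n x. if s \<le> r \<and> \<not> ereal r < t then Ddif k n x else 0),
       pstr = (\<lambda>r r' n x. if r' < s then 0 else if ereal r' < t then x
                         else (if x \<in> Dcar k n then x else 0)) \<rparr>"

definition Dsk :: "nat \<Rightarrow> real \<Rightarrow> rat pcc" where
  "Dsk k s =
     \<lparr> pscale = (*),
       pcar = (\<lambda>r n. if r < s then {0} else Dcar k n),
       pdif = (\<lambda>r n x. if s \<le> r then Ddif k n x else 0),
       pstr = (\<lambda>r r' n x. if s \<le> r' \<and> x \<in> Dcar k n then x else 0) \<rparr>"

definition zobj :: "rat pcc" where
  "zobj = \<lparr> pscale = (*), pcar = (\<lambda>r n. {0}), pdif = (\<lambda>r n x. 0), pstr = (\<lambda>r r' n x. 0) \<rparr>"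

definition incl :: "rat pcc \<Rightarrow> real \<Rightarrow> nat \<Rightarrow> rat \<Rightarrow> rat" where
  "incl Y r n x = (if x \<in> pcar Y r n then x else 0)"

end

theory Submission
  imports Defs
begin
lemma vsr: "vector_space ((*)::rat\<Rightarrow>rat\<Rightarrow>rat)" by unfold_locales (auto simp: algebra_simps)
lemma msr: "module ((*)::rat\<Rightarrow>rat\<Rightarrow>rat)" by unfold_locales (auto simp: algebra_simps)
lemma subr: "module.subspace ((*)::rat\<Rightarrow>rat\<Rightarrow>rat) S \<longleftrightarrow> (0 \<in> S \<and> (\<forall>x\<in>S. \<forall>y\<in>S. x + y \<in> S) \<and> (\<forall>c. \<forall>x\<in>S. c * x \<in> S))"
  by (simp add: module.subspace_def[OF msr])

lemma Dsk_simps[simp]: "pscale (Dsk k s) = (*)" "pcar (Dsk k s) r n = (if r < s then {0} else Dcar k n)"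
  "pdif (Dsk k s) r n x = (if s \<le> r then Ddif k n x else 0)"
  "pstr (Dsk k s) r r' n x = (if s \<le> r' \<and> x \<in> Dcar k n then x else 0)"
  by (simp_all add: Dsk_def)
lemma Sph_simps[simp]: "pscale (Sph k s t) = (*)" 
  "pcar (Sph k s t) r n = (if r < s then {0} else if ereal r < t then Scar k n else Dcar k n)"
  "pdif (Sph k s t) r n x = (if s \<le> r \<and> \<not> ereal r < t then Ddif k n x else 0)"
  "pstr (Sph k s t) r r' n x = (if r' < s then 0 else if ereal r' < t then x
                         else (if x \<in> Dcar k n then x else 0))"
  by (simp_all add: Sph_def)

lemma Dsk_pcc: "is_pcc (Dsk k s)"
  unfolding is_pcc_def lin_on_def
  by (auto simp: vsr subr Dcar_def Ddif_def algebra_simps)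

lemma er_mono: "r \<le> r' \<Longrightarrow> ereal r' < t \<Longrightarrow> ereal r < t"
  by (meson ereal_less_eq(3) order_le_less_trans)

lemma Sph_pcc: "is_pcc (Sph k s t)"
  unfolding is_pcc_def lin_on_def
  apply (auto simp: vsr subr Dcar_def Scar_def Ddif_def algebra_simps)
  apply (metis er_mono)+
  done

lemma lin0: "lin_on sa sb A f \<Longrightarrow> 0 \<in> A \<Longrightarrow> f 0 = 0"
proof -
  assume a: "lin_on sa sb A f" "0 \<in> A"
  then have "f (0 + 0) = f 0 + f 0" unfolding lin_on_def by blast
  then show "f 0 = 0" by simp
qed

lemma pcc_mod: "is_pcc X \<Longrightarrow> module (pscale X)"
  unfolding is_pcc_def by (simp add: vector_space_def module_def)

lemma pcc_D1: assumes "is_pcc X" "0 \<le> r"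
  shows "module.subspace (pscale X) (pcar X r n) \<and>
        lin_on (pscale X) (pscale X) (pcar X r n) (pdif X r n) \<and>
        pdif X r n ` pcar X r n \<subseteq> pcar X r (Suc n) \<and>
        (\<forall>x\<in>pcar X r n. pdif X r (Suc n) (pdif X r n x) = 0)"
proof -
  have "\<forall>r n. 0 \<le> r \<longrightarrow>
        module.subspace (pscale X) (pcar X r n) \<and>
        lin_on (pscale X) (pscale X) (pcar X r n) (pdif X r n) \<and>
        pdif X r n ` pcar X r n \<subseteq> pcar X r (Suc n) \<and>
        (\<forall>x\<in>pcar X r n. pdif X r (Suc n) (pdif X r n x) = 0)"
    using assms(1) unfolding is_pcc_def by (rule conjunct1[OF conjunct2])
  then show ?thesis using assms(2) by blast
qed

lemma pcc_D2: assumes "is_pcc X" "0 \<le> r" "r \<le> r'"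
  shows "lin_on (pscale X) (pscale X) (pcar X r n) (pstr X r r' n) \<and>
        pstr X r r' n ` pcar X r n \<subseteq> pcar X r' n \<and>
        (\<forall>x\<in>pcar X r n. pdif X r' n (pstr X r r' n x) = pstr X r r' (Suc n) (pdif X r n x))"
proof -
  have "\<forall>r r' n. 0 \<le> r \<and> r \<le> r' \<longrightarrow>
        lin_on (pscale X) (pscale X) (pcar X r n) (pstr X r r' n) \<and>
        pstr X r r' n ` pcar X r n \<subseteq> pcar X r' n \<and>
        (\<forall>x\<in>pcar X r n. pdif X r' n (pstr X r r' n x) = pstr X r r' (Suc n) (pdif X r n x))"
    using assms(1) unfolding is_pcc_def by (rule conjunct1[OF conjunct2[OF conjunct2]])
  then show ?thesis using assms(2,3) by blast
qed

lemma pcc_sub: "is_pcc X \<Longrightarrow> 0 \<le> r \<Longrightarrow> module.subspace (pscale X) (pcar X r n)"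
  using pcc_D1 by blast

lemma pcc0: "is_pcc X \<Longrightarrow> 0 \<le> r \<Longrightarrow> 0 \<in> pcar X r n"
  using pcc_sub[of X r n] module.subspace_0[OF pcc_mod[of X]] by blast

lemma pcc_scale0: "is_pcc X \<Longrightarrow> pscale X c 0 = 0"
  using module.scale_zero_right[OF pcc_mod[of X]] by blast

lemma pcc_dif0: "is_pcc X \<Longrightarrow> 0 \<le> r \<Longrightarrow> pdif X r n 0 = 0"
  using pcc0[of X r n] lin0[of "pscale X" "pscale X" "pcar X r n" "pdif X r n"] pcc_D1[of X r n] by blast

lemma pcc_str0: "is_pcc X \<Longrightarrow> 0 \<le> r \<Longrightarrow> r \<le> r' \<Longrightarrow> pstr X r r' n 0 = 0"
  using pcc0[of X r n] lin0[of "pscale X" "pscale X" "pcar X r n" "pstr X r r' n"] pcc_D2[of X r r' n] by blast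

lemma pmor_D0: "pmor A B f \<Longrightarrow> is_pcc A \<and> is_pcc B"
  unfolding pmor_def by (rule conjI[OF conjunct1 conjunct1[OF conjunct2]])

lemma pmor_D1: assumes "pmor A B f" "0 \<le> r"
  shows "lin_on (pscale A) (pscale B) (pcar A r n) (f r n) \<and>
        f r n ` pcar A r n \<subseteq> pcar B r n \<and>
        (\<forall>x\<in>pcar A r n. f r (Suc n) (pdif A r n x) = pdif B r n (f r n x))"
proof -
  have "\<forall>r n. 0 \<le> r \<longrightarrow>
        lin_on (pscale A) (pscale B) (pcar A r n) (f r n) \<and>
        f r n ` pcar A r n \<subseteq> pcar B r n \<and>
        (\<forall>x\<in>pcar A r n. f r (Suc n) (pdif A r n x) = pdif B r n (f r n x))"
    using assms(1) unfolding pmor_def by (rule conjunct1[OF conjunct2[OF conjunct2]])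
  then show ?thesis using assms(2) by blast
qed

lemma pmor_D2: assumes "pmor A B f" "0 \<le> r" "r \<le> r'" "x \<in> pcar A r n"
  shows "f r' n (pstr A r r' n x) = pstr B r r' n (f r n x)"
proof -
  have "\<forall>r r' n. 0 \<le> r \<and> r \<le> r' \<longrightarrow>
        (\<forall>x\<in>pcar A r n. f r' n (pstr A r r' n x) = pstr B r r' n (f r n x))"
    using assms(1) unfolding pmor_def by (rule conjunct2[OF conjunct2[OF conjunct2]])
  then show ?thesis using assms(2-4) by blast
qed

lemma pmor_I:
  assumes "is_pcc A" "is_pcc B"
    "\<And>r n. 0 \<le> r \<Longrightarrow> lin_on (pscale A) (pscale B) (pcar A r n) (f r n)"
    "\<And>r n x. 0 \<le> r \<Longrightarrow> x \<in> pcar A r n \<Longrightarrow> f r n x \<in> pcar B r n"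
    "\<And>r n x. 0 \<le> r \<Longrightarrow> x \<in> pcar A r n \<Longrightarrow> f r (Suc n) (pdif A r n x) = pdif B r n (f r n x)"
    "\<And>r r' n x. 0 \<le> r \<Longrightarrow> r \<le> r' \<Longrightarrow> x \<in> pcar A r n \<Longrightarrow> f r' n (pstr A r r' n x) = pstr B r r' n (f r n x)"
  shows "pmor A B f"
  unfolding pmor_def using assms by (simp add: image_subset_iff)

lemma pmor_lin: "pmor A B f \<Longrightarrow> 0 \<le> r \<Longrightarrow> lin_on (pscale A) (pscale B) (pcar A r n) (f r n)"
  using pmor_D1 by blast
lemma pmor_in: "pmor A B f \<Longrightarrow> 0 \<le> r \<Longrightarrow> x \<in> pcar A r n \<Longrightarrow> f r n x \<in> pcar B r n"
  using pmor_D1 by blast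
lemma pmor_dif: "pmor A B f \<Longrightarrow> 0 \<le> r \<Longrightarrow> x \<in> pcar A r n \<Longrightarrow> f r (Suc n) (pdif A r n x) = pdif B r n (f r n x)"
  using pmor_D1 by blast

lemma pmor0: "pmor A B f \<Longrightarrow> 0 \<le> r \<Longrightarrow> f r n 0 = 0"
  using pcc0[of A r n] lin0[of "pscale A" "pscale B" "pcar A r n" "f r n"] pmor_D0 pmor_lin by blast

lemma pmor_comp: assumes "pmor A B f" "pmor B C g" shows "pmor A C (\<lambda>r n x. g r n (f r n x))"
proof (rule pmor_I)
  show "is_pcc A" "is_pcc C" using assms pmor_D0 by auto
  fix r :: real and n assume r: "0 \<le> r"
  have fl: "lin_on (pscale A) (pscale B) (pcar A r n) (f r n)" 
    using assms(1) r pmor_lin by blast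
  have gl: "lin_on (pscale B) (pscale C) (pcar B r n) (g r n)" 
    using assms(2) r pmor_lin by blast
  have sA: "module.subspace (pscale A) (pcar A r n)" using assms(1) r pcc_sub pmor_D0 by blast
  have mA: "module (pscale A)" using assms(1) pcc_mod pmor_D0 by blast
  show "lin_on (pscale A) (pscale C) (pcar A r n) (\<lambda>x. g r n (f r n x))"
    unfolding lin_on_def
  proof (intro conjI allI ballI)
    fix x y assume xy: "x \<in> pcar A r n" "y \<in> pcar A r n"
    then have "f r n x \<in> pcar B r n" "f r n y \<in> pcar B r n" using assms(1) r pmor_in by blast+
    then show "g r n (f r n (x + y)) = g r n (f r n x) + g r n (f r n y)"
      using fl gl xy unfolding lin_on_def by simp
  next
    fix c x assume x: "x \<in> pcar A r n"
    then have "f r n x \<in> pcar B r n" using assms(1) r pmor_in by blast+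
    then show "g r n (f r n (pscale A c x)) = pscale C c (g r n (f r n x))"
      using fl gl x unfolding lin_on_def by simp
  qed
  fix x assume x: "x \<in> pcar A r n"
  then have fx: "f r n x \<in> pcar B r n" using assms(1) r pmor_in by blast
  then show "g r n (f r n x) \<in> pcar C r n" using assms(2) r pmor_in by blast
  show "g r (Suc n) (f r (Suc n) (pdif A r n x)) = pdif C r n (g r n (f r n x))"
    using pmor_dif[OF assms(1) r x] pmor_dif[OF assms(2) r fx] by simp
next
  fix r r' :: real and n x assume r: "0 \<le> r" and rr: "r \<le> r'" and x: "x \<in> pcar A r n"
  have "f r' n (pstr A r r' n x) = pstr B r r' n (f r n x)" using pmor_D2[OF assms(1) r rr x] .
  moreover have "f r n x \<in> pcar B r n" using assms(1) r x pmor_in by blast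
  ultimately show "g r' n (f r' n (pstr A r r' n x)) = pstr C r r' n (g r n (f r n x))"
    using pmor_D2[OF assms(2) r rr] by simp
qed

lemma q_pmor: "1 \<le> k \<Longrightarrow> pmor (Dsk (Suc k) s) (Dsk k s) (\<lambda>r n a. if n = k then a else 0)"
  apply (rule pmor_I[OF Dsk_pcc Dsk_pcc])
  apply (auto simp: lin_on_def Dcar_def Ddif_def)
  done

lemma q'_pmor: "1 \<le> k \<Longrightarrow> pmor (Sph (Suc k) s (ereal t)) (Dsk k t) (\<lambda>r n a. if n = k \<and> t \<le> r then a else 0)"
  apply (rule pmor_I[OF Sph_pcc Dsk_pcc])
  apply (auto simp: lin_on_def Dcar_def Ddif_def Scar_def)
  apply (auto simp: Scar_def not_le split: if_splits)
  done

lemma glue: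
  assumes pX: "is_pcc X" and k: "1 \<le> k" and s: "0 \<le> s" and st: "ereal s < t"
  and h1: "pmor (Dsk (Suc k) s) X h1"
  and A3: "\<And>r x. 0 \<le> r \<Longrightarrow> s \<le> r \<Longrightarrow> ereal r < t \<Longrightarrow> h1 r (Suc k) x = 0"
  and A4: "\<And>r x. 0 \<le> r \<Longrightarrow> t \<le> ereal r \<Longrightarrow> h1 r k x = u r k x"
  and A1: "\<And>r n. 0 \<le> r \<Longrightarrow> t \<le> ereal r \<Longrightarrow> lin_on (*) (pscale X) (Dcar k n) (u r n)"
  and A1b: "\<And>r n x. 0 \<le> r \<Longrightarrow> t \<le> ereal r \<Longrightarrow> x \<in> Dcar k n \<Longrightarrow> u r n x \<in> pcar X r n"
  and A1c: "\<And>r n x. 0 \<le> r \<Longrightarrow> t \<le> ereal r \<Longrightarrow> x \<in> Dcar k n \<Longrightarrow> u r (Suc n) (Ddif k n x) = pdif X r n (u r n x)"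
  and A2: "\<And>r r' n x. 0 \<le> r \<Longrightarrow> r \<le> r' \<Longrightarrow> t \<le> ereal r \<Longrightarrow> x \<in> Dcar k n \<Longrightarrow> u r' n x = pstr X r r' n (u r n x)"
  shows "pmor (Sph k s t) X (\<lambda>r n a. if t \<le> ereal r then u r n a else if n = k then h1 r k a else 0)"
proof -
  have Hc: "x = 0" if "\<not> t \<le> ereal r" "n \<noteq> k" "x \<in> pcar (Sph k s t) r n" for x r n
    using that by (auto simp: Scar_def not_le split: if_splits)
  have Hk: "pcar (Sph k s t) r k = pcar (Dsk (Suc k) s) r k" if "\<not> t \<le> ereal r" for r
    using that k by (auto simp: Scar_def Dcar_def not_le)
  have Ht: "pcar (Sph k s t) r n = Dcar k n" if "t \<le> ereal r" for r n
  proof -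
    have "ereal s < ereal r" using st that by (rule less_le_trans)
    then show ?thesis using that by (auto simp: not_less)
  qed
  have Hts: "s \<le> r" if "t \<le> ereal r" for r
  proof -
    have "ereal s < ereal r" using st that by (rule less_le_trans)
    then show ?thesis by simp
  qed
  have u0: "u r n 0 = 0" if "0 \<le> r" "t \<le> ereal r" for r n
    using lin0[OF A1[OF that, of n]] by (simp add: Dcar_def)
  have h10: "h1 r n 0 = 0" if "0 \<le> r" for r n using pmor0[OF h1 that] .
  have D0: "0 \<in> Dcar k n" for n by (simp add: Dcar_def)
  have h1nat: "h1 r' k x = pstr X r r' k (h1 r k x)" if "0 \<le> r" "r \<le> r'" "s \<le> r'" "x \<in> pcar (Dsk (Suc k) s) r k" for r r' x
  proof -
    have "h1 r' k (pstr (Dsk (Suc k) s) r r' k x) = pstr X r r' k (h1 r k x)"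
      using pmor_D2[OF h1 that(1,2,4)] .
    moreover have "pstr (Dsk (Suc k) s) r r' k x = x" using that(3) by (simp add: Dcar_def)
    ultimately show ?thesis by simp
  qed
  show ?thesis
  proof (rule pmor_I[OF Sph_pcc pX])
    fix r :: real and n assume r: "0 \<le> r"
    show "lin_on (pscale (Sph k s t)) (pscale X) (pcar (Sph k s t) r n)
          (\<lambda>a. if t \<le> ereal r then u r n a else if n = k then h1 r k a else 0)"
    proof (cases "t \<le> ereal r")
      case True then show ?thesis using A1[OF r True, of n] Ht[OF True] by simp
    next
      case False
      show ?thesis
      proof (cases "n = k")
        case True
        then show ?thesis using False pmor_lin[OF h1 r, of k] Hk[OF False] by simp
      next
        case nk: False
        then show ?thesis using False pcc_scale0[OF pX] by (simp add: lin_on_def)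
      qed
    qed
  next
    fix r :: real and n x assume r: "0 \<le> r" and x: "x \<in> pcar (Sph k s t) r n"
    show "(if t \<le> ereal r then u r n x else if n = k then h1 r k x else 0) \<in> pcar X r n"
    proof (cases "t \<le> ereal r")
      case True then show ?thesis using A1b[OF r True] x Ht[OF True] by simp
    next
      case False
      show ?thesis
      proof (cases "n = k")
        case True
        then show ?thesis using False pmor_in[OF h1 r] x Hk[OF False] by simp
      next
        case nk: False
        then show ?thesis using False pcc0[OF pX r] by simp
      qed
    qed
    show "(if t \<le> ereal r then u r (Suc n) (pdif (Sph k s t) r n x)
           else if Suc n = k then h1 r k (pdif (Sph k s t) r n x) else 0) =
          pdif X r n (if t \<le> ereal r then u r n x else if n = k then h1 r k x else 0)"
    proof (cases "t \<le> ereal r")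
      case True
      have "pdif (Sph k s t) r n x = Ddif k n x" using True Hts[OF True] by (simp add: not_less)
      then show ?thesis using A1c[OF r True] x Ht[OF True] True by simp
    next
      case False
      have pd: "pdif (Sph k s t) r n x = 0" using False by (simp add: not_le)
      show ?thesis
      proof (cases "n = k")
        case True
        show ?thesis
        proof (cases "r < s")
          case True
          then have "x = 0" using x False by (auto split: if_splits)
          then show ?thesis using pd False h10[OF r] pcc_dif0[OF pX r] by simp
        next
          case ns: False
          have xx: "x \<in> pcar (Dsk (Suc k) s) r k" using x Hk[OF False] True by simp
          have "h1 r (Suc k) (pdif (Dsk (Suc k) s) r k x) = pdif X r k (h1 r k x)"
            using pmor_dif[OF h1 r xx] .
          moreover have "pdif (Dsk (Suc k) s) r k x = x" using ns by (simp add: Ddif_def)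
          moreover have "h1 r (Suc k) x = 0" using A3[OF r] ns False by (simp add: not_le)
          ultimately show ?thesis using pd False True h10[OF r] by simp
        qed
      next
        case nk: False
        then have "x = 0" using Hc[OF False nk x] by simp
        then show ?thesis using pd False nk h10[OF r] pcc_dif0[OF pX r] by simp
      qed
    qed
  next
    fix r r' :: real and n x assume r: "0 \<le> r" and rr: "r \<le> r'" and x: "x \<in> pcar (Sph k s t) r n"
    have r': "0 \<le> r'" using r rr by simp
    show "(if t \<le> ereal r' then u r' n (pstr (Sph k s t) r r' n x)
           else if n = k then h1 r' k (pstr (Sph k s t) r r' n x) else 0) =
          pstr X r r' n (if t \<le> ereal r then u r n x else if n = k then h1 r k x else 0)"
    proof (cases "t \<le> ereal r")
      case True
      have T': "t \<le> ereal r'" using True rr order_trans by fastforce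
      have xd: "x \<in> Dcar k n" using x Ht[OF True] by simp
      have "pstr (Sph k s t) r r' n x = x" using T' Hts[OF T'] xd by (simp add: not_less)
      then show ?thesis using A2[OF r rr True xd] True T' by simp
    next
      case False
      show ?thesis
      proof (cases "t \<le> ereal r'")
        case T': True
        have sr': "s \<le> r'" using Hts[OF T'] .
        show ?thesis
        proof (cases "n = k")
          case True
          have "pstr (Sph k s t) r r' n x = x" using T' sr' True k by (simp add: not_less Dcar_def)
          moreover have xx: "x \<in> pcar (Dsk (Suc k) s) r k" using x Hk[OF False] True by simp
          ultimately show ?thesis using T' False True A4[OF r' T'] h1nat[OF r rr sr' xx] by simp
        next
          case nk: False
          then have "x = 0" using Hc[OF False nk x] by simp
          then show ?thesis using T' False nk u0[OF r' T'] pcc_str0[OF pX r rr] D0 by simp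
        qed
      next
        case F': False
        show ?thesis
        proof (cases "r' < s")
          case True
          then have "x = 0" using x False rr by (auto split: if_splits)
          then show ?thesis using True F' False h10[OF r'] h10[OF r] pcc_str0[OF pX r rr] by simp
        next
          case sr': False
          have ps: "pstr (Sph k s t) r r' n x = x" using sr' F' by (simp add: not_le)
          show ?thesis
          proof (cases "n = k")
            case True
            have xx: "x \<in> pcar (Dsk (Suc k) s) r k" using x Hk[OF False] True by simp
            show ?thesis using ps F' False True h1nat[OF r rr _ xx] sr' by simp
          next
            case nk: False
            then have "x = 0" using Hc[OF False nk x] by simp
            then show ?thesis using ps F' False nk pcc_str0[OF pX r rr] by simp
          qed
        qed
      qed
    qed
  qed
qed

lemma rlp_E:
  assumes "has_rlp A B i X Y p" "pmor A X u" "pmor B Y v"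
    "\<And>r n x. 0 \<le> r \<Longrightarrow> x \<in> pcar A r n \<Longrightarrow> v r n (i r n x) = p r n (u r n x)"
  obtains h where "pmor B X h" "\<And>r n x. 0 \<le> r \<Longrightarrow> x \<in> pcar A r n \<Longrightarrow> h r n (i r n x) = u r n x"
    "\<And>r n x. 0 \<le> r \<Longrightarrow> x \<in> pcar B r n \<Longrightarrow> p r n (h r n x) = v r n x"
proof -
  have "\<forall>r n. 0 \<le> r \<longrightarrow> (\<forall>x\<in>pcar A r n. v r n (i r n x) = p r n (u r n x))" using assms(4) by blast
  then have "\<exists>h. pmor B X h \<and>
           (\<forall>r n. 0 \<le> r \<longrightarrow> (\<forall>x\<in>pcar A r n. h r n (i r n x) = u r n x)) \<and>
           (\<forall>r n. 0 \<le> r \<longrightarrow> (\<forall>x\<in>pcar B r n. p r n (h r n x) = v r n x))"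
    using assms(1-3) unfolding has_rlp_def by blast
  then show ?thesis using that by blast
qed

lemma zero_pmor: "is_pcc A \<Longrightarrow> is_pcc X \<Longrightarrow> pmor A X (\<lambda>r n a. 0)"
  apply (rule pmor_I)
  apply (auto simp: lin_on_def pcc_scale0 pcc0 pcc_dif0 pcc_str0)
  done

lemma incl_id: "x \<in> pcar Y r n \<Longrightarrow> incl Y r n x = x" by (simp add: incl_def)
lemma incl0: "incl (Dsk k s) r n 0 = 0" by (simp add: incl_def)

lemma J1:
  assumes pXY: "pmor X Y p"
    and H: "\<forall>k s (t::ereal). 0 \<le> s \<and> ereal s < t \<longrightarrow>
           has_rlp (Sph k s t) (Dsk k s) (incl (Dsk k s)) X Y p"
    and s: "0 \<le> s" and st: "s < t"
    and u: "pmor (Dsk k t) X u" and v: "pmor (Dsk k s) Y v"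
    and c: "\<And>r n x. 0 \<le> r \<Longrightarrow> x \<in> pcar (Dsk k t) r n \<Longrightarrow> v r n (incl (Dsk k s) r n x) = p r n (u r n x)"
  obtains h where "pmor (Dsk k s) X h"
    "\<And>r n x. 0 \<le> r \<Longrightarrow> x \<in> pcar (Dsk k t) r n \<Longrightarrow> h r n (incl (Dsk k s) r n x) = u r n x"
    "\<And>r n x. 0 \<le> r \<Longrightarrow> x \<in> pcar (Dsk k s) r n \<Longrightarrow> p r n (h r n x) = v r n x"
proof -
  have pX: "is_pcc X" using pXY pmor_D0 by blast
  show ?thesis
  proof (cases "k = 0")
    case True
    show ?thesis
    proof (rule that[of "\<lambda>r n a. 0"])
      show "pmor (Dsk k s) X (\<lambda>r n a. 0)" using zero_pmor[OF Dsk_pcc pX] .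
      fix r :: real and n x assume r: "0 \<le> r"
      { assume "x \<in> pcar (Dsk k t) r n"
        moreover have "pcar (Dsk k t) r n = {0}" using True by (simp add: Dcar_def)
        ultimately have "x = 0" by simp
        then show "0 = u r n x" using pmor0[OF u r] by simp }
      { assume "x \<in> pcar (Dsk k s) r n"
        moreover have "pcar (Dsk k s) r n = {0}" using True by (simp add: Dcar_def)
        ultimately have "x = 0" by simp
        then show "p r n 0 = v r n x" using pmor0[OF v r] pmor0[OF pXY r] by simp }
    qed
  next
    case False
    then have k: "1 \<le> k" by simp
    define u1 where "u1 = (\<lambda>r n a. u r n (if n = k \<and> t \<le> r then a else 0))"
    define v1 where "v1 = (\<lambda>r n a. v r n (if n = k then a else (0::rat)))"
    have u1m: "pmor (Sph (Suc k) s (ereal t)) X u1" unfolding u1_def using pmor_comp[OF q'_pmor[OF k] u] .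
    have v1m: "pmor (Dsk (Suc k) s) Y v1" unfolding v1_def using pmor_comp[OF q_pmor[OF k] v] .
    have c1: "v1 r n (incl (Dsk (Suc k) s) r n x) = p r n (u1 r n x)"
      if r: "0 \<le> r" and x: "x \<in> pcar (Sph (Suc k) s (ereal t)) r n" for r n x
    proof (cases "n = k \<and> t \<le> r")
      case True
      have sr: "s \<le> r" using True st by simp
      have "incl (Dsk (Suc k) s) r n x = x" using True sr by (simp add: incl_def Dcar_def)
      moreover have "incl (Dsk k s) r n x = x" using True sr k by (simp add: incl_def Dcar_def)
      moreover have "x \<in> pcar (Dsk k t) r n" using True k by (simp add: Dcar_def)
      ultimately show ?thesis using c[OF r, of x n] True unfolding u1_def v1_def by simp
    next
      case False
      have "u1 r n x = 0" unfolding u1_def by (simp only: if_not_P[OF False] pmor0[OF u r])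
      moreover have "v1 r n (incl (Dsk (Suc k) s) r n x) = 0"
      proof (cases "n = k")
        case True
        then have "\<not> t \<le> r" using False by simp
        then have "pcar (Sph (Suc k) s (ereal t)) r n = {0}" using True by (simp add: Scar_def)
        then have "x = 0" using x by simp
        then show ?thesis unfolding v1_def using incl0 pmor0[OF v r] by simp
      next
        case False
        then show ?thesis unfolding v1_def using pmor0[OF v r] by simp
      qed
      ultimately show ?thesis using pmor0[OF pXY r] by simp
    qed
    have st': "ereal s < ereal t" using st by simp
    obtain h1 where h1m: "pmor (Dsk (Suc k) s) X h1"
      and h1c: "\<And>r n x. 0 \<le> r \<Longrightarrow> x \<in> pcar (Sph (Suc k) s (ereal t)) r n \<Longrightarrow> h1 r n (incl (Dsk (Suc k) s) r n x) = u1 r n x"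
      and h1p: "\<And>r n x. 0 \<le> r \<Longrightarrow> x \<in> pcar (Dsk (Suc k) s) r n \<Longrightarrow> p r n (h1 r n x) = v1 r n x"
      using rlp_E[OF H[rule_format, OF conjI[OF s st'], of "Suc k"] u1m v1m c1] by blast
    define u2 where "u2 = (\<lambda>r n a. if ereal t \<le> ereal r then u r n a else if n = k then h1 r k a else 0)"
    have u2m: "pmor (Sph k s (ereal t)) X u2" unfolding u2_def
    proof (rule glue[OF pX k s st' h1m])
      fix r :: real and x assume r: "0 \<le> r" "s \<le> r" "ereal r < ereal t"
      have x': "x \<in> pcar (Sph (Suc k) s (ereal t)) r (Suc k)" using r by (simp add: Scar_def)
      have "incl (Dsk (Suc k) s) r (Suc k) x = x" using r by (simp add: incl_def Dcar_def)
      then show "h1 r (Suc k) x = 0" using h1c[OF r(1) x'] pmor0[OF u r(1)] unfolding u1_def by simp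
    next
      fix r :: real and x assume r: "0 \<le> r" "ereal t \<le> ereal r"
      have sr: "s \<le> r" "\<not> r < s" using r st by auto
      have x': "x \<in> pcar (Sph (Suc k) s (ereal t)) r k" using r sr by (simp add: Dcar_def not_less)
      have "incl (Dsk (Suc k) s) r k x = x" using sr by (simp add: incl_def Dcar_def)
      then show "h1 r k x = u r k x" using h1c[OF r(1) x'] r unfolding u1_def by simp
    next
      fix r :: real and n assume r: "0 \<le> r" "ereal t \<le> ereal r"
      then show "lin_on (*) (pscale X) (Dcar k n) (u r n)" using pmor_lin[OF u r(1), of n] by simp
    next
      fix r :: real and n x assume r: "0 \<le> r" "ereal t \<le> ereal r" and x: "x \<in> Dcar k n"
      then show "u r n x \<in> pcar X r n" using pmor_in[OF u r(1), of x n] by simp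
    next
      fix r :: real and n x assume r: "0 \<le> r" "ereal t \<le> ereal r" and x: "x \<in> Dcar k n"
      then show "u r (Suc n) (Ddif k n x) = pdif X r n (u r n x)" using pmor_dif[OF u r(1), of x n] by simp
    next
      fix r r' :: real and n x assume r: "0 \<le> r" "r \<le> r'" "ereal t \<le> ereal r" and x: "x \<in> Dcar k n"
      then show "u r' n x = pstr X r r' n (u r n x)" using pmor_D2[OF u r(1,2), of x n] by simp
    qed
    have c2: "v r n (incl (Dsk k s) r n x) = p r n (u2 r n x)"
      if r: "0 \<le> r" and x: "x \<in> pcar (Sph k s (ereal t)) r n" for r n x
    proof (cases "t \<le> r")
      case True
      have "pcar (Sph k s (ereal t)) r n = Dcar k n" using True st by simp
      then have "x \<in> pcar (Dsk k t) r n" using x True by simp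
      then show ?thesis using c[OF r] True unfolding u2_def by simp
    next
      case nt: False
      show ?thesis
      proof (cases "n = k \<and> s \<le> r")
        case True
        have "incl (Dsk k s) r n x = x" using True k by (simp add: incl_def Dcar_def)
        moreover have "x \<in> pcar (Dsk (Suc k) s) r k" using True by (simp add: Dcar_def)
        ultimately show ?thesis using h1p[OF r, of x k] True nt unfolding u2_def v1_def by simp
      next
        case False
        then have "pcar (Sph k s (ereal t)) r n = {0}" using nt by (cases "r < s") (auto simp: Scar_def)
        then have "x = 0" using x by simp
        then show ?thesis using incl0 pmor0[OF v r] pmor0[OF pXY r] pmor0[OF h1m r] nt unfolding u2_def by simp
      qed
    qed
    obtain h2 where h2m: "pmor (Dsk k s) X h2"
      and h2c: "\<And>r n x. 0 \<le> r \<Longrightarrow> x \<in> pcar (Sph k s (ereal t)) r n \<Longrightarrow> h2 r n (incl (Dsk k s) r n x) = u2 r n x"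
      and h2p: "\<And>r n x. 0 \<le> r \<Longrightarrow> x \<in> pcar (Dsk k s) r n \<Longrightarrow> p r n (h2 r n x) = v r n x"
      using rlp_E[OF H[rule_format, OF conjI[OF s st'], of k] u2m v c2] by blast
    show ?thesis
    proof (rule that[OF h2m _ h2p])
      fix r :: real and n x assume r: "0 \<le> r" and x: "x \<in> pcar (Dsk k t) r n"
      show "h2 r n (incl (Dsk k s) r n x) = u r n x"
      proof (cases "t \<le> r")
        case True
        have "x \<in> pcar (Sph k s (ereal t)) r n" using x True st by auto
        then show ?thesis using h2c[OF r] True unfolding u2_def by simp
      next
        case False
        then have "pcar (Dsk k t) r n = {0}" by simp
        then have "x = 0" using x by simp
        then show ?thesis using incl0 pmor0[OF h2m r] pmor0[OF u r] by simp
      qed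
    qed
  qed
qed

lemma J2:
  assumes pXY: "pmor X Y p"
    and H: "\<forall>k s (t::ereal). 0 \<le> s \<and> ereal s < t \<longrightarrow>
           has_rlp (Sph k s t) (Dsk k s) (incl (Dsk k s)) X Y p"
    and s: "0 \<le> s"
    and u: "pmor zobj X u" and v: "pmor (Dsk k s) Y v"
  obtains h where "pmor (Dsk k s) X h"
    "\<And>r n x. 0 \<le> r \<Longrightarrow> x \<in> pcar zobj r n \<Longrightarrow> h r n (incl (Dsk k s) r n x) = u r n x"
    "\<And>r n x. 0 \<le> r \<Longrightarrow> x \<in> pcar (Dsk k s) r n \<Longrightarrow> p r n (h r n x) = v r n x"
proof -
  have pX: "is_pcc X" using pXY pmor_D0 by blast
  have zc: "pcar zobj r n = {0}" for r n by (simp add: zobj_def)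
  have fin: "h r n (incl (Dsk k s) r n x) = u r n x" if "pmor (Dsk k s) X h" "0 \<le> r" "x \<in> pcar zobj r n" for h r n x
  proof -
    have "x = 0" using that(3) zc by simp
    then show ?thesis using incl0 pmor0[OF that(1,2)] pmor0[OF u that(2)] by simp
  qed
  show ?thesis
  proof (cases "k = 0")
    case True
    show ?thesis
    proof (rule that[of "\<lambda>r n a. 0"])
      show "pmor (Dsk k s) X (\<lambda>r n a. 0)" using zero_pmor[OF Dsk_pcc pX] .
      fix r :: real and n x assume r: "0 \<le> r"
      { assume "x \<in> pcar zobj r n"
        then show "0 = u r n x" using zc pmor0[OF u r] by simp }
      { assume "x \<in> pcar (Dsk k s) r n"
        moreover have "pcar (Dsk k s) r n = {0}" using True by (simp add: Dcar_def)
        ultimately have "x = 0" by simp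
        then show "p r n 0 = v r n x" using pmor0[OF v r] pmor0[OF pXY r] by simp }
    qed
  next
    case False
    then have k: "1 \<le> k" by simp
    define v1 where "v1 = (\<lambda>r n a. v r n (if n = k then a else (0::rat)))"
    have u1m: "pmor (Sph (Suc k) s \<infinity>) X (\<lambda>r n a. 0)" using zero_pmor[OF Sph_pcc pX] .
    have v1m: "pmor (Dsk (Suc k) s) Y v1" unfolding v1_def using pmor_comp[OF q_pmor[OF k] v] .
    have c1: "v1 r n (incl (Dsk (Suc k) s) r n x) = p r n 0"
      if r: "0 \<le> r" and x: "x \<in> pcar (Sph (Suc k) s \<infinity>) r n" for r n x
    proof (cases "n = Suc k \<and> s \<le> r")
      case True
      then show ?thesis using pmor0[OF pXY r] pmor0[OF v r] unfolding v1_def by simp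
    next
      case False
      then have "pcar (Sph (Suc k) s \<infinity>) r n = {0}" by (cases "r < s") (auto simp: Scar_def)
      then have "x = 0" using x by simp
      then show ?thesis using incl0 pmor0[OF pXY r] pmor0[OF v1m r] by simp
    qed
    have st': "ereal s < \<infinity>" by simp
    obtain h1 where h1m: "pmor (Dsk (Suc k) s) X h1"
      and h1c: "\<And>r n x. 0 \<le> r \<Longrightarrow> x \<in> pcar (Sph (Suc k) s \<infinity>) r n \<Longrightarrow> h1 r n (incl (Dsk (Suc k) s) r n x) = 0"
      and h1p: "\<And>r n x. 0 \<le> r \<Longrightarrow> x \<in> pcar (Dsk (Suc k) s) r n \<Longrightarrow> p r n (h1 r n x) = v1 r n x"
      using rlp_E[OF H[rule_format, OF conjI[OF s st'], of "Suc k"] u1m v1m c1] by blast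
    define u2 where "u2 = (\<lambda>r n a. if \<infinity> \<le> ereal r then (0::'a) else if n = k then h1 r k a else 0)"
    have u2m: "pmor (Sph k s \<infinity>) X u2" unfolding u2_def
    proof (rule glue[OF pX k s st' h1m])
      fix r :: real and x assume r: "0 \<le> r" "s \<le> r" "ereal r < \<infinity>"
      have x': "x \<in> pcar (Sph (Suc k) s \<infinity>) r (Suc k)" using r by (simp add: Scar_def)
      have "incl (Dsk (Suc k) s) r (Suc k) x = x" using r by (simp add: incl_def Dcar_def)
      then show "h1 r (Suc k) x = 0" using h1c[OF r(1) x'] by simp
    qed simp_all
    have c2: "v r n (incl (Dsk k s) r n x) = p r n (u2 r n x)"
      if r: "0 \<le> r" and x: "x \<in> pcar (Sph k s \<infinity>) r n" for r n x
    proof (cases "n = k \<and> s \<le> r")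
      case True
      have "incl (Dsk k s) r n x = x" using True k by (simp add: incl_def Dcar_def)
      moreover have "x \<in> pcar (Dsk (Suc k) s) r k" using True by (simp add: Dcar_def)
      ultimately show ?thesis using h1p[OF r, of x k] True unfolding u2_def v1_def by simp
    next
      case False
      then have "pcar (Sph k s \<infinity>) r n = {0}" by (cases "r < s") (auto simp: Scar_def)
      then have "x = 0" using x by simp
      then show ?thesis using incl0 pmor0[OF v r] pmor0[OF pXY r] pmor0[OF h1m r] unfolding u2_def by simp
    qed
    show ?thesis
    proof (rule rlp_E[OF H[rule_format, OF conjI[OF s st'], of k] u2m v c2])
      fix h2 assume h2m: "pmor (Dsk k s) X h2"
        and h2p: "\<And>r n x. 0 \<le> r \<Longrightarrow> x \<in> pcar (Dsk k s) r n \<Longrightarrow> p r n (h2 r n x) = v r n x"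
      show thesis using that[OF h2m fin[OF h2m] h2p] .
    qed
  qed
qed

theorem mainTheorem9:
  fixes X :: "'a::ab_group_add pcc" and Y :: "'b::ab_group_add pcc"
    and p :: "real \<Rightarrow> nat \<Rightarrow> 'a \<Rightarrow> 'b"
  assumes "pmor X Y p"
    and "\<forall>k s (t::ereal). 0 \<le> s \<and> ereal s < t \<longrightarrow>
           has_rlp (Sph k s t) (Dsk k s) (incl (Dsk k s)) X Y p"
  shows "(\<forall>k s t. 0 \<le> s \<and> s < t \<longrightarrow> has_rlp (Dsk k t) (Dsk k s) (incl (Dsk k s)) X Y p) \<and>
         (\<forall>k s. 0 \<le> s \<longrightarrow> has_rlp zobj (Dsk k s) (incl (Dsk k s)) X Y p)"
proof (intro conjI allI impI)
  fix k and s t :: real assume st: "0 \<le> s \<and> s < t"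
  show "has_rlp (Dsk k t) (Dsk k s) (incl (Dsk k s)) X Y p"
    unfolding has_rlp_def
  proof (intro allI impI)
    fix u v assume u: "pmor (Dsk k t) X u" and v: "pmor (Dsk k s) Y v"
      and c: "\<forall>r n. 0 \<le> r \<longrightarrow> (\<forall>x\<in>pcar (Dsk k t) r n. v r n (incl (Dsk k s) r n x) = p r n (u r n x))"
    obtain h where "pmor (Dsk k s) X h"
      "\<And>r n x. 0 \<le> r \<Longrightarrow> x \<in> pcar (Dsk k t) r n \<Longrightarrow> h r n (incl (Dsk k s) r n x) = u r n x"
      "\<And>r n x. 0 \<le> r \<Longrightarrow> x \<in> pcar (Dsk k s) r n \<Longrightarrow> p r n (h r n x) = v r n x"
      using J1[OF assms(1,2) conjunct1[OF st] conjunct2[OF st] u v] c by blast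
    then show "\<exists>h. pmor (Dsk k s) X h \<and>
           (\<forall>r n. 0 \<le> r \<longrightarrow> (\<forall>x\<in>pcar (Dsk k t) r n. h r n (incl (Dsk k s) r n x) = u r n x)) \<and>
           (\<forall>r n. 0 \<le> r \<longrightarrow> (\<forall>x\<in>pcar (Dsk k s) r n. p r n (h r n x) = v r n x))" by blast
  qed
next
  fix k s assume s: "0 \<le> (s::real)"
  show "has_rlp zobj (Dsk k s) (incl (Dsk k s)) X Y p"
    unfolding has_rlp_def
  proof (intro allI impI)
    fix u v assume u: "pmor zobj X u" and v: "pmor (Dsk k s) Y v"
    obtain h where "pmor (Dsk k s) X h"
      "\<And>r n x. 0 \<le> r \<Longrightarrow> x \<in> pcar zobj r n \<Longrightarrow> h r n (incl (Dsk k s) r n x) = u r n x"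
      "\<And>r n x. 0 \<le> r \<Longrightarrow> x \<in> pcar (Dsk k s) r n \<Longrightarrow> p r n (h r n x) = v r n x"
      using J2[OF assms(1,2) s u v] by blast
    then show "\<exists>h. pmor (Dsk k s) X h \<and>
           (\<forall>r n. 0 \<le> r \<longrightarrow> (\<forall>x\<in>pcar zobj r n. h r n (incl (Dsk k s) r n x) = u r n x)) \<and>
           (\<forall>r n. 0 \<le> r \<longrightarrow> (\<forall>x\<in>pcar (Dsk k s) r n. p r n (h r n x) = v r n x))" by blast
  qed
qed
end
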